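(* Let $d\ge 1$, $T\ge 1$, let $\mathcal{X}\subseteq\mathbb{R}^d$ be a non-empty closed convex set, and let $0<\mu\le L$. Let $f_1,\dots,f_T:\mathcal{X}\to[0,\infty)$ be differentiable with $\frac{\mu}{2}\|y-x\|^2\le f_t(y)-f_t(x)-\langle\nabla f_t(x),y-x\rangle\le\frac{L}{2}\|y-x\|^2$ for all $t$ and $x,y\in\mathcal{X}$. Let $x_1,\dots,x_T$ be the iterates of the OMGD algorithm with $K=\lceil\frac{L+\mu}{2\mu}\ln4\rceil$ from a starting point $x_0\in\mathcal{X}$, and let $C_{\mathcal{A}_o}=\sum_{t=1}^T\big(f_t(x_t)+\|x_t-x_{t-1}\|\big)$. Then for any $\alpha>0$, $$C_{\mathcal{A}_o}\le\sum_{t=1}^T f_t(x_t^\star)+\frac{1}{2\alpha}\sum_{t=1}^T\|\nabla f_t(x_t^\star)\|^2+(L+\alpha)\big(\|x_1-x_1^\star\|^2+2\mathcal{P}_{2,T}^\star\big)+3\|x_1-x_1^\star\|+3\mathcal{P}_T^\star.$$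
   Context: $x_t^\star=\arg\min_{x\in\mathcal{X}}f_t(x)$, $\mathcal{P}_T^\star=\sum_{t=2}^T\|x_t^\star-x_{t-1}^\star\|$, $\mathcal{P}_{2,T}^\star=\sum_{t=2}^T\|x_t^\star-x_{t-1}^\star\|^2$. OMGD with parameter $K$: $x_1=x_0$; for $t=2,\dots,T$, $z_t^{(0)}=x_{t-1}$, $z_t^{(k)}=\Pi_{\mathcal{X}}\big(z_t^{(k-1)}-\frac1L\nabla f_{t-1}(z_t^{(k-1)})\big)$ ($k=1,\dots,K$), $x_t=z_t^{(K)}$, where $\Pi_{\mathcal{X}}$ is Euclidean projection onto $\mathcal{X}$. *)

theory Defs
  imports "HOL-Analysis.Analysis"
begin

definition pgd_step :: "'a::euclidean_space set \<Rightarrow> real \<Rightarrow> ('a \<Rightarrow> 'a) \<Rightarrow> 'a \<Rightarrow> 'a" where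
  "pgd_step X L g z = closest_point X (z - (1 / L) *\<^sub>R g z)"

text \<open>OMGD iterates: omgd X L grad K x0 t = x_t.  x_0 = x_1 = x0 and for t \<ge> 2,
  x_t is obtained from x_(t-1) by K projected gradient steps on f_(t-1),
  where grad (t-1) is the gradient of f_(t-1).\<close>
fun omgd :: "'a::euclidean_space set \<Rightarrow> real \<Rightarrow> (nat \<Rightarrow> 'a \<Rightarrow> 'a) \<Rightarrow> nat \<Rightarrow> 'a \<Rightarrow> nat \<Rightarrow> 'a" where
  "omgd X L grad K x0 0 = x0"
| "omgd X L grad K x0 (Suc 0) = x0"
| "omgd X L grad K x0 (Suc (Suc n)) =
     (pgd_step X L (grad (Suc n)) ^^ K) (omgd X L grad K x0 (Suc n))"

end

theory Submission
  imports Defs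
begin

lemma first_order_opt:
  fixes X :: "'a::euclidean_space set"
  assumes cX: "convex X" and xs: "xs \<in> X" and mn: "\<forall>y\<in>X. f xs \<le> f y"
    and L: "L > 0"
    and sm: "\<And>y. y \<in> X \<Longrightarrow> f y - f xs - g \<bullet> (y - xs) \<le> L / 2 * (norm (y - xs))\<^sup>2"
    and y: "y \<in> X"
  shows "g \<bullet> (y - xs) \<ge> 0"
proof (rule ccontr)
  assume neg: "\<not> g \<bullet> (y - xs) \<ge> 0"
  define c where "c = g \<bullet> (y - xs)"
  define N where "N = L / 2 * (norm (y - xs))\<^sup>2 + 1"
  have c: "c < 0" using neg c_def by simp
  have "0 \<le> L / 2 * (norm (y - xs))\<^sup>2" using L by simp
  hence N: "N > 0" unfolding N_def by linarith
  define s where "s = min 1 (- c / (2 * N))"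
  have s0: "s > 0" using c N by (simp add: s_def divide_neg_pos)
  have s1: "s \<le> 1" by (simp add: s_def)
  have sN: "s * N \<le> - c / 2" using N c by (simp add: s_def min_def field_simps)
  define w where "w = xs + s *\<^sub>R (y - xs)"
  have "(1 - s) *\<^sub>R xs + s *\<^sub>R y \<in> X"
    using cX xs y s0 s1 unfolding convex_def by simp
  moreover have "w = (1 - s) *\<^sub>R xs + s *\<^sub>R y" by (simp add: w_def algebra_simps)
  ultimately have w: "w \<in> X" by simp
  have "f w - f xs - g \<bullet> (w - xs) \<le> L / 2 * (norm (w - xs))\<^sup>2" using sm[OF w] .
  moreover have "f xs \<le> f w" using mn w by auto
  moreover have "g \<bullet> (w - xs) = s * c" by (simp add: w_def c_def)
  moreover have "(norm (w - xs))\<^sup>2 = s\<^sup>2 * (norm (y - xs))\<^sup>2"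
    by (simp add: w_def power_mult_distrib)
  ultimately have "- (s * c) \<le> s\<^sup>2 * (L / 2 * (norm (y - xs))\<^sup>2)" by (simp add: algebra_simps)
  also have "\<dots> \<le> s\<^sup>2 * N" using s0 by (intro mult_left_mono) (auto simp: N_def)
  finally have "s * (- c) \<le> s * (s * N)" by (simp add: power2_eq_square algebra_simps)
  hence "- c \<le> s * N" using s0 by (rule mult_left_le_imp_le)
  with sN c show False by simp
qed

lemma arith_core:
  fixes fp fz fx gpz gxz gb gxb L \<mu> na nb nab ab :: real
  assumes "fp - fz - gpz \<le> L / 2 * na" "\<mu> / 2 * nab \<le> fx - fz - gxz" "gb \<le> L * ab"
    "\<mu> / 2 * nb \<le> fp - fx - gxb" "gxb \<ge> 0" "nab = na + 2 * ab + nb" "gpz - gxz = gb"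
  shows "(L + \<mu>) / 2 * nb \<le> (L - \<mu>) / 2 * nab"
proof -
  have "\<mu> / 2 * nab + \<mu> / 2 * nb \<le> L / 2 * na + L * ab" using assms by linarith
  thus ?thesis unfolding assms(6) by (simp add: field_simps)
qed

lemma one_step:
  fixes X :: "'a::euclidean_space set"
  assumes cX: "convex X" and clX: "closed X" and ne: "X \<noteq> {}"
    and mu: "0 < \<mu>" "\<mu> \<le> L"
    and strong: "\<And>x y. x \<in> X \<Longrightarrow> y \<in> X \<Longrightarrow>
                  \<mu> / 2 * (norm (y - x))\<^sup>2 \<le> f y - f x - g x \<bullet> (y - x)"
    and smooth: "\<And>x y. x \<in> X \<Longrightarrow> y \<in> X \<Longrightarrow>
                  f y - f x - g x \<bullet> (y - x) \<le> L / 2 * (norm (y - x))\<^sup>2"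
    and xs: "xs \<in> X" and mn: "\<forall>y\<in>X. f xs \<le> f y"
    and z: "z \<in> X"
  shows "pgd_step X L g z \<in> X"
    "(norm (pgd_step X L g z - xs))\<^sup>2 \<le> (L - \<mu>) / (L + \<mu>) * (norm (z - xs))\<^sup>2"
proof -
  define p where "p = pgd_step X L g z"
  have L: "L > 0" using mu by linarith
  show pX: "pgd_step X L g z \<in> X" unfolding pgd_step_def using clX ne by (rule closest_point_in_set)
  hence p: "p \<in> X" by (simp add: p_def)
  define a where "a = z - p"
  define b where "b = p - xs"
  have e1: "p - z = - a" "xs - z = - (a + b)" "p - xs = b" "z - xs = a + b"
    by (simp_all add: a_def b_def)
  have h1: "f p - f z - g z \<bullet> (p - z) \<le> L / 2 * (norm (p - z))\<^sup>2" using smooth[OF z p] .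
  have h2: "\<mu> / 2 * (norm (xs - z))\<^sup>2 \<le> f xs - f z - g z \<bullet> (xs - z)" using strong[OF z xs] .
  have h3: "(z - (1 / L) *\<^sub>R g z - p) \<bullet> (xs - p) \<le> 0"
    unfolding p_def pgd_step_def by (rule closest_point_dot[OF cX clX xs])
  have h4: "\<mu> / 2 * (norm (p - xs))\<^sup>2 \<le> f p - f xs - g xs \<bullet> (p - xs)" using strong[OF xs p] .
  have h5: "g xs \<bullet> (p - xs) \<ge> 0"
    by (rule first_order_opt[OF cX xs mn L _ p]) (rule smooth[OF xs])
  have h3': "g z \<bullet> b \<le> L * (a \<bullet> b)"
  proof -
    have "(a - (1 / L) *\<^sub>R g z) \<bullet> b \<ge> 0" using h3
      by (simp add: a_def b_def algebra_simps inner_diff_left inner_diff_right)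
    hence "a \<bullet> b - (1 / L) * (g z \<bullet> b) \<ge> 0" by (simp add: inner_diff_left)
    hence "L * (a \<bullet> b) - L * ((1 / L) * (g z \<bullet> b)) \<ge> 0" using L
      by (metis diff_ge_0_iff_ge mult_left_mono order_less_imp_le)
    thus ?thesis using L by simp
  qed
  have na: "(norm (a + b))\<^sup>2 = (norm a)\<^sup>2 + 2 * (a \<bullet> b) + (norm b)\<^sup>2"
    by (simp add: power2_norm_eq_inner inner_add_left inner_add_right inner_commute)
  have "g z \<bullet> (p - z) - g z \<bullet> (xs - z) = g z \<bullet> b"
    by (simp add: e1 inner_add_right inner_minus_right inner_diff_right)
  hence key: "(L + \<mu>) / 2 * (norm b)\<^sup>2 \<le> (L - \<mu>) / 2 * (norm (a + b))\<^sup>2"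
  proof -
    have n1: "norm (xs - z) = norm (a + b)" "norm (p - z) = norm a" "norm (p - xs) = norm b"
      using e1 by (metis norm_minus_cancel)+
    have m1: "\<mu> * (norm (a + b))\<^sup>2 = \<mu> * (norm a)\<^sup>2 + \<mu> * (norm b)\<^sup>2 + 2 * \<mu> * (a \<bullet> b)"
      "L * (norm (a + b))\<^sup>2 = L * (norm a)\<^sup>2 + L * (norm b)\<^sup>2 + 2 * L * (a \<bullet> b)"
      using na by (simp_all add: algebra_simps)
    have e2: "g xs \<bullet> (p - xs) = g xs \<bullet> b" using e1 by simp
    show ?thesis using h1 h2 h3' h4 h5 unfolding n1 e2
      by (intro arith_core[OF _ _ _ _ _ na \<open>g z \<bullet> (p - z) - g z \<bullet> (xs - z) = g z \<bullet> b\<close>])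
  qed
  have "(L + \<mu>) * (norm b)\<^sup>2 \<le> (L - \<mu>) * (norm (a + b))\<^sup>2" using key by simp
  hence "(norm b)\<^sup>2 \<le> (L - \<mu>) * (norm (a + b))\<^sup>2 / (L + \<mu>)" using mu
    by (simp add: pos_le_divide_eq mult.commute)
  thus "(norm (pgd_step X L g z - xs))\<^sup>2 \<le> (L - \<mu>) / (L + \<mu>) * (norm (z - xs))\<^sup>2"
    by (simp add: e1 b_def p_def)
qed

lemma k_steps:
  fixes X :: "'a::euclidean_space set"
  assumes cX: "convex X" and clX: "closed X" and ne: "X \<noteq> {}"
    and mu: "0 < \<mu>" "\<mu> \<le> L"
    and strong: "\<And>x y. x \<in> X \<Longrightarrow> y \<in> X \<Longrightarrow>
                  \<mu> / 2 * (norm (y - x))\<^sup>2 \<le> f y - f x - g x \<bullet> (y - x)"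
    and smooth: "\<And>x y. x \<in> X \<Longrightarrow> y \<in> X \<Longrightarrow>
                  f y - f x - g x \<bullet> (y - x) \<le> L / 2 * (norm (y - x))\<^sup>2"
    and xs: "xs \<in> X" and mn: "\<forall>y\<in>X. f xs \<le> f y"
    and z: "z \<in> X"
  shows "(pgd_step X L g ^^ K) z \<in> X \<and>
    (norm ((pgd_step X L g ^^ K) z - xs))\<^sup>2 \<le> ((L - \<mu>) / (L + \<mu>)) ^ K * (norm (z - xs))\<^sup>2"
proof (induction K)
  case 0
  then show ?case using z by simp
next
  case (Suc K)
  let ?w = "(pgd_step X L g ^^ K) z"
  have w: "?w \<in> X" using Suc by simp
  note os = one_step[OF cX clX ne mu strong smooth xs mn w]
  have r0: "(L - \<mu>) / (L + \<mu>) \<ge> 0" using mu by simp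
  have "(norm (pgd_step X L g ?w - xs))\<^sup>2 \<le> (L - \<mu>) / (L + \<mu>) * (norm (?w - xs))\<^sup>2" using os(2) .
  also have "\<dots> \<le> (L - \<mu>) / (L + \<mu>) * (((L - \<mu>) / (L + \<mu>)) ^ K * (norm (z - xs))\<^sup>2)"
    using Suc.IH r0 by (intro mult_left_mono) auto
  finally show ?case using os(1) by (simp add: mult.assoc)
qed

lemma rate:
  fixes \<mu> L :: real
  assumes mu: "0 < \<mu>" "\<mu> \<le> L"
  shows "((L - \<mu>) / (L + \<mu>)) ^ (nat \<lceil>(L + \<mu>) / (2 * \<mu>) * ln 4\<rceil>) \<le> 1 / 4"
proof -
  define K where "K = nat \<lceil>(L + \<mu>) / (2 * \<mu>) * ln 4\<rceil>"
  define r where "r = 2 * \<mu> / (L + \<mu>)"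
  have r0: "r > 0" using mu by (simp add: r_def)
  have rho: "(L - \<mu>) / (L + \<mu>) = 1 - r" using mu by (simp add: r_def field_simps)
  have rho0: "1 - r \<ge> 0" using mu by (simp add: r_def field_simps)
  have "(1 - r) \<le> exp (- r)" using exp_ge_add_one_self[of "- r"] by simp
  hence "(1 - r) ^ K \<le> exp (- r) ^ K" using rho0 by (rule power_mono)
  also have "\<dots> = exp (- (r * real K))" by (metis exp_of_nat_mult mult.commute mult_minus_right)
  also have "\<dots> \<le> exp (- ln 4)"
  proof -
    have ln4: "ln (4::real) \<ge> 0" by simp
    have "real K \<ge> (L + \<mu>) / (2 * \<mu>) * ln 4" unfolding K_def by linarith
    hence "r * real K \<ge> r * ((L + \<mu>) / (2 * \<mu>) * ln 4)" using r0 by (intro mult_left_mono) auto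
    moreover have "r * ((L + \<mu>) / (2 * \<mu>) * ln 4) = ln 4" using mu by (simp add: r_def)
    ultimately show ?thesis by simp
  qed
  also have "\<dots> = 1 / 4" by (simp add: exp_minus)
  finally show ?thesis by (simp add: rho K_def)
qed

lemma rec_sum:
  fixes a b :: "nat \<Rightarrow> real"
  assumes "\<forall>t. 2 \<le> t \<and> t \<le> T \<longrightarrow> a t \<le> c * a (t - 1) + b t" "c \<ge> 0" "T \<ge> 1"
  shows "(\<Sum>t=1..T. a t) \<le> a 1 + c * (\<Sum>t\<in>{1..<T}. a t) + (\<Sum>t=2..T. b t)"
  using assms
proof (induction T)
  case 0
  then show ?case by simp
next
  case (Suc T)
  show ?case
  proof (cases "T = 0")
    case True
    then show ?thesis by simp
  next
    case False
    have IH: "(\<Sum>t=1..T. a t) \<le> a 1 + c * (\<Sum>t\<in>{1..<T}. a t) + (\<Sum>t=2..T. b t)"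
      using Suc False by auto
    have st: "a (Suc T) \<le> c * a T + b (Suc T)" using Suc.prems(1)[rule_format, of "Suc T"] False by auto
    have e1: "(\<Sum>t=1..Suc T. a t) = (\<Sum>t=1..T. a t) + a (Suc T)" by simp
    have e2: "(\<Sum>t\<in>{1..<Suc T}. a t) = (\<Sum>t\<in>{1..<T}. a t) + a T" using False by simp
    have e3: "(\<Sum>t=2..Suc T. b t) = (\<Sum>t=2..T. b t) + b (Suc T)" using False by simp
    show ?thesis unfolding e1 e2 e3 using IH st by (simp add: algebra_simps)
  qed
qed

lemma move_sum:
  fixes m e :: "nat \<Rightarrow> real"
  assumes "\<forall>t. 2 \<le> t \<and> t \<le> T \<longrightarrow> m t \<le> c * e (t - 1)" "m 1 \<le> 0"
  shows "(\<Sum>t=1..T. m t) \<le> c * (\<Sum>t\<in>{1..<T}. e t)"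
  using assms
proof (induction T)
  case 0
  then show ?case by simp
next
  case (Suc T)
  show ?case
  proof (cases "T = 0")
    case True
    then show ?thesis using Suc by simp
  next
    case False
    have IH: "(\<Sum>t=1..T. m t) \<le> c * (\<Sum>t\<in>{1..<T}. e t)"
      using Suc False by auto
    have st: "m (Suc T) \<le> c * e T" using Suc.prems(1)[rule_format, of "Suc T"] False by auto
    have e1: "(\<Sum>t=1..Suc T. m t) = (\<Sum>t=1..T. m t) + m (Suc T)" by simp
    have e2: "(\<Sum>t\<in>{1..<Suc T}. e t) = (\<Sum>t\<in>{1..<T}. e t) + e T" using False by simp
    show ?thesis unfolding e1 e2 using IH st by (simp add: algebra_simps)
  qed
qed

lemma young:
  fixes g v :: "'a::real_inner" and \<alpha> :: real
  assumes "\<alpha> > 0"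
  shows "g \<bullet> v \<le> 1 / (2 * \<alpha>) * (norm g)\<^sup>2 + \<alpha> / 2 * (norm v)\<^sup>2"
proof -
  have "g \<bullet> v \<le> norm g * norm v" by (rule norm_cauchy_schwarz)
  moreover have "0 \<le> (norm g - \<alpha> * norm v)\<^sup>2" by simp
  hence "2 * \<alpha> * (norm g * norm v) \<le> (norm g)\<^sup>2 + \<alpha>\<^sup>2 * (norm v)\<^sup>2"
    by (simp add: power2_eq_square algebra_simps)
  hence "norm g * norm v \<le> ((norm g)\<^sup>2 + \<alpha>\<^sup>2 * (norm v)\<^sup>2) / (2 * \<alpha>)"
    using assms by (simp add: pos_le_divide_eq mult.commute)
  moreover have "((norm g)\<^sup>2 + \<alpha>\<^sup>2 * (norm v)\<^sup>2) / (2 * \<alpha>) = 1 / (2 * \<alpha>) * (norm g)\<^sup>2 + \<alpha> / 2 * (norm v)\<^sup>2"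
    using assms by (simp add: field_simps power2_eq_square)
  ultimately show ?thesis by linarith
qed

theorem lemma13:
  fixes X :: "'a::euclidean_space set"
    and f :: "nat \<Rightarrow> 'a \<Rightarrow> real"
    and grad :: "nat \<Rightarrow> 'a \<Rightarrow> 'a"
    and xs :: "nat \<Rightarrow> 'a"
    and x0 :: 'a
    and T :: nat
    and \<mu> L \<alpha> :: real
  assumes T: "T \<ge> 1"
    and X: "X \<noteq> {}" "closed X" "convex X"
    and mu: "0 < \<mu>" "\<mu> \<le> L"
    and nonneg: "\<And>t x. t \<in> {1..T} \<Longrightarrow> x \<in> X \<Longrightarrow> f t x \<ge> 0"
    and deriv: "\<And>t x. t \<in> {1..T} \<Longrightarrow> x \<in> X \<Longrightarrow>
                  (f t has_derivative (\<lambda>h. grad t x \<bullet> h)) (at x within X)"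
    and strong: "\<And>t x y. t \<in> {1..T} \<Longrightarrow> x \<in> X \<Longrightarrow> y \<in> X \<Longrightarrow>
                  \<mu> / 2 * (norm (y - x))\<^sup>2 \<le> f t y - f t x - grad t x \<bullet> (y - x)"
    and smooth: "\<And>t x y. t \<in> {1..T} \<Longrightarrow> x \<in> X \<Longrightarrow> y \<in> X \<Longrightarrow>
                  f t y - f t x - grad t x \<bullet> (y - x) \<le> L / 2 * (norm (y - x))\<^sup>2"
    and xs: "\<And>t. t \<in> {1..T} \<Longrightarrow> xs t \<in> X \<and> (\<forall>y\<in>X. f t (xs t) \<le> f t y)"
    and x0: "x0 \<in> X"
    and alpha: "\<alpha> > 0"
  shows "(let K = nat \<lceil>(L + \<mu>) / (2 * \<mu>) * ln 4\<rceil>;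
              x = omgd X L grad K x0;
              P = (\<Sum>t=2..T. norm (xs t - xs (t - 1)));
              P2 = (\<Sum>t=2..T. (norm (xs t - xs (t - 1)))\<^sup>2)
          in (\<Sum>t=1..T. f t (x t) + norm (x t - x (t - 1)))
             \<le> (\<Sum>t=1..T. f t (xs t))
               + 1 / (2 * \<alpha>) * (\<Sum>t=1..T. (norm (grad t (xs t)))\<^sup>2)
               + (L + \<alpha>) * ((norm (x 1 - xs 1))\<^sup>2 + 2 * P2)
               + 3 * norm (x 1 - xs 1) + 3 * P)"
proof -
  define K where "K = nat \<lceil>(L + \<mu>) / (2 * \<mu>) * ln 4\<rceil>"
  define x where "x = omgd X L grad K x0"
  define e where "e t = norm (x t - xs t)" for t
  define d where "d t = norm (xs t - xs (t - 1))" for t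
  define P where "P = (\<Sum>t=2..T. d t)"
  define P2 where "P2 = (\<Sum>t=2..T. (d t)\<^sup>2)"
  have L: "L > 0" using mu by linarith
  have rt: "((L - \<mu>) / (L + \<mu>)) ^ K \<le> 1 / 4" unfolding K_def by (rule rate[OF mu])
  have step: "x (Suc (Suc n)) \<in> X \<and> norm (x (Suc (Suc n)) - xs (Suc n)) \<le> e (Suc n) / 2"
    if n: "Suc n \<le> T" and xn: "x (Suc n) \<in> X" for n
  proof -
    have tn: "Suc n \<in> {1..T}" using n by simp
    have xsn: "xs (Suc n) \<in> X" "\<forall>y\<in>X. f (Suc n) (xs (Suc n)) \<le> f (Suc n) y" using xs[OF tn] by auto
    have ks: "(pgd_step X L (grad (Suc n)) ^^ K) (x (Suc n)) \<in> X \<and>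
      (norm ((pgd_step X L (grad (Suc n)) ^^ K) (x (Suc n)) - xs (Suc n)))\<^sup>2 \<le> ((L - \<mu>) / (L + \<mu>)) ^ K * (norm (x (Suc n) - xs (Suc n)))\<^sup>2"
      apply (rule k_steps[OF X(3) X(2) X(1) mu, where f = "f (Suc n)" and g = "grad (Suc n)"])
         apply (rule strong[OF tn]; assumption)
        apply (rule smooth[OF tn]; assumption)
      using xsn xn by auto
    have xe: "x (Suc (Suc n)) = (pgd_step X L (grad (Suc n)) ^^ K) (x (Suc n))"
      by (simp add: x_def)
    have A: "x (Suc (Suc n)) \<in> X" and
      B: "(norm (x (Suc (Suc n)) - xs (Suc n)))\<^sup>2 \<le> ((L - \<mu>) / (L + \<mu>)) ^ K * (e (Suc n))\<^sup>2"
      using ks unfolding xe e_def by auto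
    have "((L - \<mu>) / (L + \<mu>)) ^ K * (e (Suc n))\<^sup>2 \<le> 1 / 4 * (e (Suc n))\<^sup>2"
      using rt by (intro mult_right_mono) auto
    also have "\<dots> = (e (Suc n) / 2)\<^sup>2" by (simp add: power2_eq_square)
    finally have "(norm (x (Suc (Suc n)) - xs (Suc n)))\<^sup>2 \<le> (e (Suc n) / 2)\<^sup>2" using B by linarith
    hence "norm (x (Suc (Suc n)) - xs (Suc n)) \<le> e (Suc n) / 2"
      by (rule power2_le_imp_le) (simp add: e_def)
    with A show ?thesis by simp
  qed
  have xX: "x n \<in> X" if "n \<le> T" for n
    using that
  proof (induction n)
    case 0
    then show ?case using x0 by (simp add: x_def)
  next
    case (Suc n)
    show ?case
    proof (cases n)
      case 0
      then show ?thesis using x0 by (simp add: x_def)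
    next
      case (Suc m)
      have "x (Suc m) \<in> X" using Suc.IH Suc.prems \<open>n = Suc m\<close> by simp
      then show ?thesis using step[of m] Suc.prems \<open>n = Suc m\<close> by simp
    qed
  qed
  have e0: "e t \<ge> 0" for t by (simp add: e_def)
  have d0: "d t \<ge> 0" for t by (simp add: d_def)
  have half: "norm (x t - xs (t - 1)) \<le> e (t - 1) / 2" if "2 \<le> t" "t \<le> T" for t
  proof -
    define n where "n = t - 2"
    have tn: "t = Suc (Suc n)" using that(1) unfolding n_def by arith
    have n1: "Suc n \<le> T" using that(2) tn by simp
    have "x (Suc n) \<in> X" using xX n1 by blast
    hence "norm (x (Suc (Suc n)) - xs (Suc n)) \<le> e (Suc n) / 2" using step[OF n1] by blast
    thus ?thesis unfolding tn by simp
  qed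
  have erec: "e t \<le> 1 / 2 * e (t - 1) + d t" if "2 \<le> t" "t \<le> T" for t
  proof -
    have "e t \<le> norm (x t - xs (t - 1)) + d t" unfolding e_def d_def
      using norm_triangle_ineq4[of "x t - xs (t - 1)" "xs t - xs (t - 1)"] by simp
    thus ?thesis using half[OF that] by simp
  qed
  have e2rec: "(e t)\<^sup>2 \<le> 1 / 2 * (e (t - 1))\<^sup>2 + 2 * (d t)\<^sup>2" if "2 \<le> t" "t \<le> T" for t
  proof -
    have "(e t)\<^sup>2 \<le> (1 / 2 * e (t - 1) + d t)\<^sup>2"
      using erec[OF that] e0 by (intro power_mono) auto
    also have "\<dots> \<le> 1 / 2 * (e (t - 1))\<^sup>2 + 2 * (d t)\<^sup>2"
      using sum_squares_ge_zero[of "1 / 2 * e (t - 1) - d t" 0]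
      by (simp add: power2_eq_square algebra_simps)
    finally show ?thesis .
  qed
  have mv: "norm (x t - x (t - 1)) \<le> 3 / 2 * e (t - 1)" if "2 \<le> t" "t \<le> T" for t
  proof -
    have "norm (x t - x (t - 1)) \<le> norm (x t - xs (t - 1)) + e (t - 1)" unfolding e_def
      using norm_triangle_ineq4[of "x t - xs (t - 1)" "x (t - 1) - xs (t - 1)"] by simp
    thus ?thesis using half[OF that] by simp
  qed
  have x1: "x 1 = x0" "x 0 = x0" by (simp_all add: x_def)
  have Se_sub: "(\<Sum>t\<in>{1..<T}. e t) \<le> (\<Sum>t=1..T. e t)"
    by (rule sum_mono2) (auto simp: e0)
  have Se2_sub: "(\<Sum>t\<in>{1..<T}. (e t)\<^sup>2) \<le> (\<Sum>t=1..T. (e t)\<^sup>2)"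
    by (rule sum_mono2) auto
  have Se: "(\<Sum>t=1..T. e t) \<le> 2 * e 1 + 2 * P"
  proof -
    have "(\<Sum>t=1..T. e t) \<le> e 1 + 1 / 2 * (\<Sum>t\<in>{1..<T}. e t) + (\<Sum>t=2..T. d t)"
      by (rule rec_sum) (use erec T in auto)
    thus ?thesis using Se_sub unfolding P_def by linarith
  qed
  have Se2: "(\<Sum>t=1..T. (e t)\<^sup>2) \<le> 2 * (e 1)\<^sup>2 + 4 * P2"
  proof -
    have "(\<Sum>t=1..T. (e t)\<^sup>2) \<le> (e 1)\<^sup>2 + 1 / 2 * (\<Sum>t\<in>{1..<T}. (e t)\<^sup>2) + (\<Sum>t=2..T. 2 * (d t)\<^sup>2)"
      by (rule rec_sum[where a = "\<lambda>t. (e t)\<^sup>2" and b = "\<lambda>t. 2 * (d t)\<^sup>2"])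
        (use e2rec T in auto)
    moreover have "(\<Sum>t=2..T. 2 * (d t)\<^sup>2) = 2 * P2" unfolding P2_def by (simp add: sum_distrib_left)
    ultimately show ?thesis using Se2_sub by linarith
  qed
  have Sm: "(\<Sum>t=1..T. norm (x t - x (t - 1))) \<le> 3 * e 1 + 3 * P"
  proof -
    have "(\<Sum>t=1..T. norm (x t - x (t - 1))) \<le> 3 / 2 * (\<Sum>t\<in>{1..<T}. e t)"
      by (rule move_sum[where m = "\<lambda>t. norm (x t - x (t - 1))"]) (use mv x1 in auto)
    thus ?thesis using Se Se_sub by linarith
  qed
  have fb: "f t (x t) \<le> f t (xs t) + 1 / (2 * \<alpha>) * (norm (grad t (xs t)))\<^sup>2 + (L + \<alpha>) / 2 * (e t)\<^sup>2"
    if t: "t \<in> {1..T}" for t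
  proof -
    have xt: "x t \<in> X" using xX t by auto
    have "f t (x t) - f t (xs t) - grad t (xs t) \<bullet> (x t - xs t) \<le> L / 2 * (e t)\<^sup>2"
      using smooth[OF t _ xt] xs[OF t] unfolding e_def by auto
    moreover have "grad t (xs t) \<bullet> (x t - xs t) \<le> 1 / (2 * \<alpha>) * (norm (grad t (xs t)))\<^sup>2 + \<alpha> / 2 * (e t)\<^sup>2"
      unfolding e_def by (rule young[OF alpha])
    ultimately show ?thesis by (simp add: field_simps)
  qed
  have Sf: "(\<Sum>t=1..T. f t (x t)) \<le> (\<Sum>t=1..T. f t (xs t))
      + 1 / (2 * \<alpha>) * (\<Sum>t=1..T. (norm (grad t (xs t)))\<^sup>2) + (L + \<alpha>) / 2 * (\<Sum>t=1..T. (e t)\<^sup>2)"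
  proof -
    have "(\<Sum>t=1..T. f t (x t)) \<le> (\<Sum>t=1..T. f t (xs t) + 1 / (2 * \<alpha>) * (norm (grad t (xs t)))\<^sup>2 + (L + \<alpha>) / 2 * (e t)\<^sup>2)"
      by (rule sum_mono) (rule fb)
    thus ?thesis by (simp add: sum.distrib sum_distrib_left)
  qed
  have La: "(L + \<alpha>) / 2 \<ge> 0" using L alpha by simp
  have "(L + \<alpha>) / 2 * (\<Sum>t=1..T. (e t)\<^sup>2) \<le> (L + \<alpha>) / 2 * (2 * (e 1)\<^sup>2 + 4 * P2)"
    using Se2 La by (rule mult_left_mono)
  also have "\<dots> = (L + \<alpha>) * ((e 1)\<^sup>2 + 2 * P2)" by (simp add: field_simps)
  finally have fin: "(\<Sum>t=1..T. f t (x t) + norm (x t - x (t - 1)))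
     \<le> (\<Sum>t=1..T. f t (xs t)) + 1 / (2 * \<alpha>) * (\<Sum>t=1..T. (norm (grad t (xs t)))\<^sup>2)
       + (L + \<alpha>) * ((e 1)\<^sup>2 + 2 * P2) + 3 * e 1 + 3 * P"
    using Sf Sm by (simp add: sum.distrib)
  show ?thesis using fin unfolding Let_def K_def[symmetric] x_def[symmetric] P_def P2_def e_def d_def .
qed

end
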